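(* Let $R$ be a finite set of nonnegative integers and let $\mathcal{H}$ be a family of hypergraphs each having set of edge types $R$. For each $n$, let $\pi_n(\mathcal{H})$ be the maximum of the Lubell function $h_n(G)$ over all hypergraphs $G$ on $n$ vertices with $R(G)\subseteq R$ which contain no member of $\mathcal{H}$ as a subgraph. Then the limit $\lim_{n\to\infty}\pi_n(\mathcal{H})$ exists.
   Context: A hypergraph $H=(V,E)$ has a finite vertex set $V$ and edge set $E\subseteq 2^V$ (edges may have different sizes). $R(H)=\{|F|: F\in E\}$ is its set of edge types. A hypergraph $H_1$ is a subgraph of $H_2$ if there is an injective map $f\colon V(H_1)\to V(H_2)$ with $f(F)\in E(H_2)$ for every $F\in E(H_1)$. For a hypergraph $G$ on $n$ vertices, the Lubell function is $h_n(G)=\sum_{F\in E(G)} 1/\binom{n}{|F|}$. *)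

theory Defs
  imports Complex_Main
begin

definition hypergraph :: "'a set \<times> 'a set set \<Rightarrow> bool" where
  "hypergraph H \<longleftrightarrow> finite (fst H) \<and> snd H \<subseteq> Pow (fst H)"

definition edge_types :: "'a set \<times> 'a set set \<Rightarrow> nat set" where
  "edge_types H = card ` snd H"

definition subgraph_of :: "'a set \<times> 'a set set \<Rightarrow> 'b set \<times> 'b set set \<Rightarrow> bool" where
  "subgraph_of H1 H2 \<longleftrightarrow>
     (\<exists>f. inj_on f (fst H1) \<and> f ` fst H1 \<subseteq> fst H2 \<and> (\<forall>F\<in>snd H1. f ` F \<in> snd H2))"

definition lubell :: "nat \<Rightarrow> 'a set \<times> 'a set set \<Rightarrow> real" where
  "lubell n G = (\<Sum>F\<in>snd G. 1 / real (n choose card F))"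

definition lubell_pi :: "nat set \<Rightarrow> ('a set \<times> 'a set set) set \<Rightarrow> nat \<Rightarrow> real" where
  "lubell_pi R \<H> n = Max {lubell n G | G :: nat set \<times> nat set set.
      hypergraph G \<and> fst G = {0..<n} \<and> edge_types G \<subseteq> R \<and>
      (\<forall>H\<in>\<H>. \<not> subgraph_of H G)}"

end

theory Submission
  imports Defs
begin

lemma binom_avg:
  fixes m k :: nat
  assumes "k < m"
  shows "real (m - k) / real ((m - 1) choose k) = real m / real (m choose k)"
proof -
  have e: "(m - k) * (m choose k) = m * ((m - 1) choose k)" by (rule binomial_absorb_comp)
  have p1: "((m - 1) choose k) > 0" using assms by simp
  have p2: "(m choose k) > 0" using assms by simp
  have "real (m - k) * real (m choose k) = real m * real ((m - 1) choose k)"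
    using e by (metis of_nat_mult)
  then show ?thesis using p1 p2 by (simp add: field_simps)
qed

lemma delete_vertex:
  fixes G :: "nat set \<times> nat set set" and \<H> :: "('a set \<times> 'a set set) set"
  assumes hg: "hypergraph G" and V: "fst G = {0..<Suc n}" and et: "edge_types G \<subseteq> R"
    and Rb: "\<forall>k\<in>R. k < Suc n" and fr: "\<forall>H\<in>\<H>. \<not> subgraph_of H G"
  shows "\<exists>G' :: nat set \<times> nat set set. hypergraph G' \<and> fst G' = {0..<n} \<and> edge_types G' \<subseteq> R \<and>
     (\<forall>H\<in>\<H>. \<not> subgraph_of H G') \<and> lubell (Suc n) G \<le> lubell n G'"
proof -
  define m where "m = Suc n"
  define E where "E = snd G"
  have Esub: "E \<subseteq> Pow {0..<m}" using hg V unfolding hypergraph_def E_def m_def by auto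
  have finE: "finite E" using Esub finite_subset by (metis finite_Pow_iff finite_atLeastLessThan)
  have cardE: "\<And>F. F \<in> E \<Longrightarrow> card F < m"
    using et Rb unfolding edge_types_def E_def m_def by auto
  define val where "val v = (\<Sum>F\<in>E. if v \<notin> F then 1 / real (n choose card F) else 0)" for v
  have sumval: "(\<Sum>v<m. val v) = real m * lubell m G"
  proof -
    have "(\<Sum>v<m. val v) = (\<Sum>F\<in>E. \<Sum>v<m. if v \<notin> F then 1 / real (n choose card F) else 0)"
      unfolding val_def by (rule sum.swap)
    also have "\<dots> = (\<Sum>F\<in>E. real m / real (m choose card F))"
    proof (rule sum.cong[OF refl])
      fix F assume F: "F \<in> E"
      have Fs: "F \<subseteq> {..<m}" using F Esub by fastforce
      have fF: "finite F" using Fs finite_subset by blast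
      have "(\<Sum>v<m. if v \<notin> F then 1 / real (n choose card F) else 0)
            = (\<Sum>v\<in>{..<m} - F. 1 / real (n choose card F))"
        by (simp add: sum.If_cases Diff_eq Compl_eq)
      also have "\<dots> = real (m - card F) / real (n choose card F)"
        using Fs fF by (simp add: card_Diff_subset)
      also have "\<dots> = real m / real (m choose card F)"
        using binom_avg[of "card F" m] cardE[OF F] unfolding m_def by simp
      finally show "(\<Sum>v<m. if v \<notin> F then 1 / real (n choose card F) else 0) = real m / real (m choose card F)" .
    qed
    also have "\<dots> = real m * lubell m G"
      unfolding lubell_def E_def by (simp add: sum_distrib_left)
    finally show ?thesis .
  qed
  have "\<exists>v<m. lubell m G \<le> val v"
  proof (rule ccontr)
    assume "\<not> ?thesis"
    then have "\<forall>v\<in>{..<m}. val v < lubell m G" by auto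
    then have "(\<Sum>v<m. val v) < (\<Sum>v<m. lubell m G)"
      by (intro sum_strict_mono) (auto simp: m_def)
    then show False using sumval by simp
  qed
  then obtain v where v: "v < m" "lubell m G \<le> val v" by blast
  define \<sigma> where "\<sigma> x = (if x = v then n else if x = n then v else x)" for x
  have ss: "\<sigma> (\<sigma> x) = x" for x unfolding \<sigma>_def by auto
  have injs: "inj \<sigma>" by (metis ss injI)
  define D where "D = {F\<in>E. v \<notin> F}"
  define G' where "G' = ({0..<n}, (`) \<sigma> ` D)"
  have img: "\<sigma> ` F \<subseteq> {0..<n}" if "F \<in> D" for F
  proof
    fix y assume "y \<in> \<sigma> ` F"
    then obtain x where x: "x \<in> F" "y = \<sigma> x" by blast
    have "x < m" "x \<noteq> v" using x that Esub unfolding D_def by fastforce+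
    then show "y \<in> {0..<n}" using x v unfolding \<sigma>_def m_def by auto
  qed
  have h1: "hypergraph G'" unfolding G'_def hypergraph_def using img by auto
  have h2: "edge_types G' \<subseteq> R"
  proof
    fix k assume "k \<in> edge_types G'"
    then obtain F where F: "F \<in> D" "k = card (\<sigma> ` F)" unfolding edge_types_def G'_def by auto
    have "k = card F" using F card_image injs by (metis inj_on_subset subset_UNIV)
    then show "k \<in> R" using F et unfolding D_def E_def edge_types_def by auto
  qed
  have h3: "\<forall>H\<in>\<H>. \<not> subgraph_of H G'"
  proof (intro ballI notI)
    fix H assume H: "H \<in> \<H>" and s: "subgraph_of H G'"
    then obtain f where f: "inj_on f (fst H)" "f ` fst H \<subseteq> {0..<n}"
      "\<forall>F\<in>snd H. f ` F \<in> (`) \<sigma> ` D" unfolding subgraph_of_def G'_def by auto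
    have "subgraph_of H G"
      unfolding subgraph_of_def
    proof (intro exI[of _ "\<sigma> \<circ> f"] conjI ballI)
      show "inj_on (\<sigma> \<circ> f) (fst H)" using f(1) injs by (simp add: comp_inj_on inj_on_subset)
      show "(\<sigma> \<circ> f) ` fst H \<subseteq> fst G"
      proof
        fix y assume "y \<in> (\<sigma> \<circ> f) ` fst H"
        then obtain x where "x \<in> fst H" "y = \<sigma> (f x)" by auto
        then have "f x < n" using f(2) by auto
        then show "y \<in> fst G" using \<open>y = _\<close> v V unfolding \<sigma>_def m_def by auto
      qed
      fix F assume "F \<in> snd H"
      then obtain F0 where "F0 \<in> D" "f ` F = \<sigma> ` F0" using f(3) by auto
      then have "(\<sigma> \<circ> f) ` F = \<sigma> ` \<sigma> ` F0" by (metis image_comp)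
      also have "\<dots> = F0" using ss by (simp add: image_image)
      finally have "(\<sigma> \<circ> f) ` F = F0" .
      then show "(\<sigma> \<circ> f) ` F \<in> snd G" using \<open>F0 \<in> D\<close> unfolding D_def E_def by auto
    qed
    then show False using fr H by auto
  qed
  have injimg: "inj_on ((`) \<sigma>) D" using injs by (meson inj_image_eq_iff inj_onI)
  have "lubell n G' = (\<Sum>F\<in>D. 1 / real (n choose card (\<sigma> ` F)))"
    unfolding lubell_def G'_def by (simp add: sum.reindex[OF injimg])
  also have "\<dots> = (\<Sum>F\<in>D. 1 / real (n choose card F))"
    using injs by (intro sum.cong refl) (metis card_image inj_on_subset subset_UNIV)
  also have "\<dots> = val v"
    unfolding val_def D_def using finE by (simp add: sum.inter_filter[symmetric])
  finally have h4: "lubell m G \<le> lubell n G'" using v by simp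
  show ?thesis using h1 h2 h3 h4 unfolding m_def G'_def by auto
qed


theorem mainTheorem1:
  fixes R :: "nat set" and \<H> :: "('a set \<times> 'a set set) set"
  assumes "finite R"
    and "\<forall>H\<in>\<H>. hypergraph H \<and> edge_types H = R"
  shows "convergent (\<lambda>n. lubell_pi R \<H> n)"
proof -
  define P where "P n G \<longleftrightarrow> hypergraph G \<and> fst G = {0..<n} \<and> edge_types G \<subseteq> R \<and>
      (\<forall>H\<in>\<H>. \<not> subgraph_of H G)" for n and G :: "nat set \<times> nat set set"
  define S where "S n = {lubell n G | G. P n G}" for n
  have fdef: "lubell_pi R \<H> n = Max (S n)" for n
    unfolding lubell_pi_def S_def P_def by simp
  have finS: "finite (S n)" for n
  proof -
    have "{G. P n G} \<subseteq> {{0..<n}} \<times> Pow (Pow {0..<n})"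
      unfolding P_def hypergraph_def by (auto simp: mem_Times_iff) (metis PowD atLeastLessThan_iff subsetD)
    then have "finite {G. P n G}" by (rule finite_subset) auto
    then have "finite (lubell n ` {G. P n G})" by simp
    moreover have "S n = lubell n ` {G. P n G}" unfolding S_def by auto
    ultimately show ?thesis by simp
  qed
  define N where "N = Max (insert 0 R)"
  have RN: "\<forall>k\<in>R. k < Suc n" if "N \<le> n" for n
    using that assms(1) unfolding N_def by (meson Max_ge finite_insert insertCI le_imp_less_Suc order_trans)
  have step: "S n \<noteq> {} \<and> Max (S (Suc n)) \<le> Max (S n)" if sa: "N \<le> n" "S (Suc n) \<noteq> {}" for n
  proof -
    have ex: "\<exists>y\<in>S n. x \<le> y" if "x \<in> S (Suc n)" for x
    proof -
      obtain G where G: "x = lubell (Suc n) G" "P (Suc n) G" using \<open>x \<in> S (Suc n)\<close> unfolding S_def by auto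
      obtain G' :: "nat set \<times> nat set set" where "hypergraph G' \<and> fst G' = {0..<n} \<and> edge_types G' \<subseteq> R \<and>
        (\<forall>H\<in>\<H>. \<not> subgraph_of H G') \<and> lubell (Suc n) G \<le> lubell n G'"
        using delete_vertex[of G n R \<H>] G(2) RN[OF \<open>N \<le> n\<close>] unfolding P_def by blast
      then have "P n G'" "x \<le> lubell n G'" using G unfolding P_def by auto
      then show ?thesis unfolding S_def by blast
    qed
    obtain x where "x \<in> S (Suc n)" using sa(2) by auto
    then have ne: "S n \<noteq> {}" using ex by auto
    have "Max (S (Suc n)) \<in> S (Suc n)" using sa(2) finS by simp
    then obtain y where "y \<in> S n" "Max (S (Suc n)) \<le> y" using ex by blast
    then have "Max (S (Suc n)) \<le> Max (S n)" using finS[of n] by (meson Max_ge order_trans)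
    then show ?thesis using ne by simp
  qed
  have nonneg: "0 \<le> Max (S n)" if ne0: "S n \<noteq> {}" for n
  proof -
    obtain x where x: "x \<in> S n" using ne0 by auto
    have "0 \<le> x" using x unfolding S_def lubell_def by (auto intro: sum_nonneg)
    then show ?thesis using x finS[of n] by (meson Max_ge order_trans)
  qed
  show ?thesis
  proof (cases "\<forall>n\<ge>N. S n \<noteq> {}")
    case True
    define g where "g k = Max (S (k + N))" for k
    have "decseq g" unfolding decseq_Suc_iff g_def
      using step True by (metis add_Suc le_add2)
    moreover have "\<forall>i. 0 \<le> g i" unfolding g_def using nonneg True by simp
    ultimately obtain L where "g \<longlonglongrightarrow> L" using decseq_convergent by blast
    then have "convergent (\<lambda>k. lubell_pi R \<H> (k + N))" unfolding g_def fdef convergent_def by blast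
    then show ?thesis by (simp add: convergent_ignore_initial_segment)
  next
    case False
    then obtain n0 where n0: "n0 \<ge> N" "S n0 = {}" by auto
    have emp: "S (k + n0) = {}" for k
    proof (induction k)
      case 0 then show ?case using n0 by simp
    next
      case (Suc k)
      then show ?case using step[of "k + n0"] n0 by auto
    qed
    have "(\<lambda>k. lubell_pi R \<H> (k + n0)) = (\<lambda>k. Max {})" unfolding fdef using emp by simp
    then have "convergent (\<lambda>k. lubell_pi R \<H> (k + n0))" by (simp add: convergent_const)
    then show ?thesis by (simp add: convergent_ignore_initial_segment)
  qed
qed

end
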